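(* Let $T_2$ be the tree with vertices $w,x,y,z,u_1,a_1,b_1$ and edges $wx,xy,yz,zu_1,u_1a_1,u_1b_1$, and let $T_3$ be the tree obtained from $T_2$ by adding vertices $u_2,a_2,b_2$ and edges $zu_2,u_2a_2,u_2b_2$. Let $v$ be a vertex of $T_2$, $S$ a $\Delta_S$-star with $\Delta_S\ge 3$, and $G=T_2\rhd_v S$ a graph of order $n$ and maximum degree $\Delta\ge 3$ with $G\not\cong T_3$. Then $\gamma^{\rm ID}(G)\le \left(\frac{\Delta-1}{\Delta}\right)n$.
   Context: An identifying code of a graph $G$ is a set $C\subseteq V(G)$ such that every vertex $v$ has $N[v]\cap C\neq\emptyset$ and for all distinct $u,v$, $N[u]\cap C \ne N[v]\cap C$, where $N[v]$ is the closed neighborhood; $\gamma^{\rm ID}(G)$ is its minimum size. A $k$-star is $K_{1,k}$. For a graph $G'$, a vertex $v$ of $G'$ and a star $S$, $G'\rhd_v S$ is the graph obtained from the disjoint union of $G'$ and $S$ by identifying $v$ with a leaf of $S$. *)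

theory Defs
  imports Complex_Main
begin

text \<open>A finite simple graph is represented by its vertex set and its edge set,
  edges being two-element sets of vertices.\<close>
type_synonym 'a graph = "'a set \<times> 'a set set"

definition verts :: "'a graph \<Rightarrow> 'a set" where "verts G = fst G"
definition edges :: "'a graph \<Rightarrow> 'a set set" where "edges G = snd G"

definition nbhd :: "'a graph \<Rightarrow> 'a \<Rightarrow> 'a set" where
  "nbhd G v = {u \<in> verts G. {u, v} \<in> edges G \<and> u \<noteq> v}"

definition closed_nbhd :: "'a graph \<Rightarrow> 'a \<Rightarrow> 'a set" where
  "closed_nbhd G v = insert v (nbhd G v)"

definition degree :: "'a graph \<Rightarrow> 'a \<Rightarrow> nat" where
  "degree G v = card (nbhd G v)"

definition max_degree :: "'a graph \<Rightarrow> nat" where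
  "max_degree G = Max (degree G ` verts G)"

definition order :: "'a graph \<Rightarrow> nat" where
  "order G = card (verts G)"

definition is_id_code :: "'a graph \<Rightarrow> 'a set \<Rightarrow> bool" where
  "is_id_code G C \<longleftrightarrow> C \<subseteq> verts G
     \<and> (\<forall>v \<in> verts G. closed_nbhd G v \<inter> C \<noteq> {})
     \<and> (\<forall>u \<in> verts G. \<forall>v \<in> verts G. u \<noteq> v \<longrightarrow> closed_nbhd G u \<inter> C \<noteq> closed_nbhd G v \<inter> C)"

definition has_id_code :: "'a graph \<Rightarrow> bool" where
  "has_id_code G \<longleftrightarrow> (\<exists>C. is_id_code G C)"

text \<open>Identifying code number: minimum size of an identifying code
  (meaningful when has_id_code G).\<close>
definition gamma_ID :: "'a graph \<Rightarrow> nat" where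
  "gamma_ID G = (LEAST k. \<exists>C. is_id_code G C \<and> card C = k)"

definition graph_iso :: "'a graph \<Rightarrow> 'b graph \<Rightarrow> bool" where
  "graph_iso G H \<longleftrightarrow> (\<exists>f. bij_betw f (verts G) (verts H)
     \<and> (\<forall>u \<in> verts G. \<forall>v \<in> verts G. {u, v} \<in> edges G \<longleftrightarrow> {f u, f v} \<in> edges H))"

text \<open>star_attach G v k is G \<rhd>_v S for the k-star S = K_{1,k}:
  S has centre Inr 0 and leaves Inr 1, ..., Inr k; the leaf
  Inr 1 is identified with Inl v.\<close>
definition star_attach :: "'a graph \<Rightarrow> 'a \<Rightarrow> nat \<Rightarrow> ('a + nat) graph" where
  "star_attach G v k =
    (Inl ` verts G \<union> {Inr 0} \<union> Inr ` {2..k},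
     ((\<lambda>e. Inl ` e) ` edges G) \<union> {{Inr 0, Inl v}} \<union> ((\<lambda>i. {Inr 0, Inr i}) ` {2..k}))"

text \<open>T2: w=0, x=1, y=2, z=3, u1=4, a1=5, b1=6.\<close>
definition T2 :: "nat graph" where
  "T2 = ({0..6}, {{0,1},{1,2},{2,3},{3,4},{4,5},{4,6}})"

text \<open>T3: T2 plus u2=7, a2=8, b2=9 with edges z u2, u2 a2, u2 b2.\<close>
definition T3 :: "nat graph" where
  "T3 = ({0..9}, {{0,1},{1,2},{2,3},{3,4},{4,5},{4,6},{3,7},{7,8},{7,9}})"

end

theory Submission imports Defs
begin

lemma vertsG: "verts (star_attach G v k) = Inl ` verts G \<union> {Inr 0} \<union> Inr ` {2..k}"
  by (simp add: star_attach_def verts_def)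

lemma Inl_pair_eq: "({Inl a, Inl b} = Inl ` e) = (e = {a, b})"
proof -
  have "{Inl a, Inl b} = Inl ` {a,b}" by simp
  then show ?thesis by (metis inj_Inl inj_image_eq_iff)
qed

lemma cn_Inl:
  assumes "x \<in> verts G" "v \<in> verts G"
  shows "closed_nbhd (star_attach G v k) (Inl x) = Inl ` closed_nbhd G x \<union> (if x = v then {Inr 0} else {})"
  using assms
  unfolding closed_nbhd_def nbhd_def star_attach_def verts_def edges_def
  by (auto simp: doubleton_eq_iff image_iff Inl_pair_eq)

lemma cn_Inr0:
  assumes "v \<in> verts G"
  shows "closed_nbhd (star_attach G v k) (Inr 0) = {Inr 0, Inl v} \<union> Inr ` {2..k}"
  using assms
  unfolding closed_nbhd_def nbhd_def star_attach_def verts_def edges_def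
  by (auto simp: doubleton_eq_iff image_iff)

lemma cn_Inri:
  assumes "i \<in> {2..k}"
  shows "closed_nbhd (star_attach G v k) (Inr i) = {Inr i, Inr 0}"
  using assms
  unfolding closed_nbhd_def nbhd_def star_attach_def verts_def edges_def
  by (auto simp: doubleton_eq_iff image_iff)


lemma code_lemma:
  assumes v: "v \<in> verts G" and k: "k \<ge> 3" and A: "A \<subseteq> verts G" "v \<in> A"
    and dom: "\<forall>x\<in>verts G. x \<noteq> v \<longrightarrow> closed_nbhd G x \<inter> A \<noteq> {}"
    and sep: "\<forall>x\<in>verts G. \<forall>y\<in>verts G. x \<noteq> y \<longrightarrow> (x = v) = (y = v) \<longrightarrow>
                 closed_nbhd G x \<inter> A \<noteq> closed_nbhd G y \<inter> A"
  shows "is_id_code (star_attach G v k) (Inl ` A \<union> {Inr 0} \<union> Inr ` {3..k})"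
proof -
  let ?C = "Inl ` A \<union> {Inr 0} \<union> Inr ` {3..k}"
  let ?H = "star_attach G v k"
  have I1: "closed_nbhd ?H (Inl x) \<inter> ?C = Inl ` (closed_nbhd G x \<inter> A) \<union> (if x = v then {Inr 0} else {})"
    if "x \<in> verts G" for x
    using cn_Inl[OF that v, of k] by auto
  have I2: "closed_nbhd ?H (Inr 0) \<inter> ?C = {Inr 0, Inl v} \<union> Inr ` {3..k}"
    unfolding cn_Inr0[OF v, of k] using A k by (auto simp: image_iff)
  have I3: "closed_nbhd ?H (Inr i) \<inter> ?C = {Inr 0} \<union> (if i \<ge> 3 then {Inr i} else {})"
    if "i \<in> {2..k}" for i
    unfolding cn_Inri[OF that, of G v] using that by (auto simp: image_iff)
  have V: "verts ?H = Inl ` verts G \<union> {Inr 0} \<union> Inr ` {2..k}" by (rule vertsG)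
  have sub: "?C \<subseteq> verts ?H" using A k by (auto simp: V)
  have domH: "closed_nbhd ?H u \<inter> ?C \<noteq> {}" if uV: "u \<in> verts ?H" for u
  proof -
    consider (a) x where "u = Inl x" "x \<in> verts G" | (b) "u = Inr 0" | (c) i where "u = Inr i" "i \<in> {2..k}"
      using uV unfolding V by blast
    then show ?thesis
    proof cases
      case a then show ?thesis using I1[OF a(2)] dom by (cases "x = v") auto
    next
      case b then show ?thesis using I2 by auto
    next
      case c then show ?thesis using I3[OF c(2)] by auto
    qed
  qed
  let ?S = "\<lambda>u. closed_nbhd ?H u \<inter> ?C"
  have LL: "?S (Inl x) \<noteq> ?S (Inl y)" if "x \<in> verts G" "y \<in> verts G" "x \<noteq> y" for x y
  proof (cases "(x = v) = (y = v)")
    case True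
    then have "closed_nbhd G x \<inter> A \<noteq> closed_nbhd G y \<inter> A" using sep that by blast
    then have "Inl ` (closed_nbhd G x \<inter> A) \<noteq> Inl ` (closed_nbhd G y \<inter> A)"
      by (metis inj_Inl inj_image_eq_iff)
    moreover have "x \<noteq> v" "y \<noteq> v" using True that(3) by auto
    ultimately show ?thesis unfolding I1[OF that(1)] I1[OF that(2)] by simp
  next
    case False
    then show ?thesis unfolding I1[OF that(1)] I1[OF that(2)] by auto
  qed
  have L0: "?S (Inl x) \<noteq> ?S (Inr 0)" if "x \<in> verts G" for x
  proof -
    have "Inr 3 \<in> ?S (Inr 0)" unfolding I2 using k by auto
    moreover have "Inr 3 \<notin> ?S (Inl x)" unfolding I1[OF that] by auto
    ultimately show ?thesis by blast
  qed
  have LR: "?S (Inl x) \<noteq> ?S (Inr j)" if "x \<in> verts G" "j \<in> {2..k}" for x j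
  proof (cases "j \<ge> 3")
    case True
    have "Inr j \<in> ?S (Inr j)" unfolding I3[OF that(2)] using True by auto
    moreover have "Inr j \<notin> ?S (Inl x)" unfolding I1[OF that(1)] using True by auto
    ultimately show ?thesis by blast
  next
    case False
    then have e: "?S (Inr j) = {Inr 0}" unfolding I3[OF that(2)] by auto
    show ?thesis
    proof (cases "x = v")
      case True
      have "v \<in> closed_nbhd G v" by (simp add: closed_nbhd_def)
      then have "Inl v \<in> ?S (Inl x)" unfolding I1[OF that(1)] using True A by auto
      then show ?thesis using e by auto
    next
      case False
      then show ?thesis unfolding e I1[OF that(1)] by auto
    qed
  qed
  have R0: "?S (Inr 0) \<noteq> ?S (Inr j)" if "j \<in> {2..k}" for j
  proof -
    have "Inl v \<in> ?S (Inr 0)" unfolding I2 by auto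
    moreover have "Inl v \<notin> ?S (Inr j)" unfolding I3[OF that] by auto
    ultimately show ?thesis by blast
  qed
  have RR: "?S (Inr i) \<noteq> ?S (Inr j)" if "i \<in> {2..k}" "j \<in> {2..k}" "i \<noteq> j" for i j
  proof (cases "i \<ge> 3")
    case True
    have "Inr i \<in> ?S (Inr i)" unfolding I3[OF that(1)] using True by auto
    moreover have "Inr i \<notin> ?S (Inr j)" unfolding I3[OF that(2)] using that by auto
    ultimately show ?thesis by blast
  next
    case False
    then have "j \<ge> 3" using that by auto
    have "Inr j \<in> ?S (Inr j)" unfolding I3[OF that(2)] using \<open>j \<ge> 3\<close> by auto
    moreover have "Inr j \<notin> ?S (Inr i)" unfolding I3[OF that(1)] using that by auto
    ultimately show ?thesis by blast
  qed
  have sepH: "?S u \<noteq> ?S w" if "u \<in> verts ?H" "w \<in> verts ?H" "u \<noteq> w" for u w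
  proof -
    have cs: "(\<exists>x. u' = Inl x \<and> x \<in> verts G) \<or> u' = Inr 0 \<or> (\<exists>i. u' = Inr i \<and> i \<in> {2..k})"
      if "u' \<in> verts ?H" for u'
      using that unfolding V by blast
    from cs[OF that(1)] cs[OF that(2)] show ?thesis
    proof (elim disjE exE conjE)
      fix x y assume "u = Inl x" "x \<in> verts G" "w = Inl y" "y \<in> verts G"
      then show ?thesis using LL that(3) by blast
    next
      fix x assume "u = Inl x" "x \<in> verts G" "w = Inr 0"
      then show ?thesis using L0 by blast
    next
      fix x j assume "u = Inl x" "x \<in> verts G" "w = Inr j" "j \<in> {2..k}"
      then show ?thesis using LR by blast
    next
      fix y assume "u = Inr 0" "w = Inl y" "y \<in> verts G"
      then show ?thesis using L0 by metis
    next
      assume "u = Inr 0" "w = Inr 0" then show ?thesis using that(3) by blast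
    next
      fix j assume "u = Inr 0" "w = Inr j" "j \<in> {2..k}"
      then show ?thesis using R0 by blast
    next
      fix i y assume "u = Inr i" "i \<in> {2..k}" "w = Inl y" "y \<in> verts G"
      then show ?thesis using LR by metis
    next
      fix i assume "u = Inr i" "i \<in> {2..k}" "w = Inr 0"
      then show ?thesis using R0 by metis
    next
      fix i j assume "u = Inr i" "i \<in> {2..k}" "w = Inr j" "j \<in> {2..k}"
      then show ?thesis using RR that(3) by blast
    qed
  qed
  show ?thesis unfolding is_id_code_def
  proof (intro conjI ballI impI)
    show "?C \<subseteq> verts ?H" by (rule sub)
  next
    fix u assume "u \<in> verts ?H"
    then show "closed_nbhd ?H u \<inter> ?C \<noteq> {}" by (rule domH)
  next
    fix u w assume "u \<in> verts ?H" "w \<in> verts ?H" "u \<noteq> w"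
    then show "closed_nbhd ?H u \<inter> ?C \<noteq> closed_nbhd ?H w \<inter> ?C" by (rule sepH)
  qed
qed


lemma arithA:
  fixes k D a :: nat
  assumes "D \<ge> k" "k \<ge> 3" "(a = 4) \<or> (a = 5 \<and> k \<ge> 4)"
  shows "real (a + k - 1) \<le> (real D - 1) / real D * real (k + 7)"
proof -
  have D0: "real D > 0" using assms by simp
  have "real (a + k - 1) * real D \<le> (real D - 1) * real (k + 7)"
    using assms by (auto simp: algebra_simps of_nat_diff)
  then show ?thesis using D0 by (simp add: field_simps)
qed

lemma T2_verts: "verts T2 = {0,1,2,3,4,5,6}"
  by (auto simp: T2_def verts_def)

lemma T2_cn:
  "closed_nbhd T2 0 = {0,1}" "closed_nbhd T2 1 = {0,1,2}" "closed_nbhd T2 2 = {1,2,3}"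
  "closed_nbhd T2 3 = {2,3,4}" "closed_nbhd T2 4 = {3,4,5,6}" "closed_nbhd T2 5 = {4,5}"
  "closed_nbhd T2 6 = {4,6}" "closed_nbhd T2 (Suc 0) = {0,1,2}"
  by (auto simp: closed_nbhd_def nbhd_def T2_def verts_def edges_def doubleton_eq_iff)

lemma test: "\<forall>x\<in>verts T2. \<forall>y\<in>verts T2. x \<noteq> y \<longrightarrow> (x = (0::nat)) = (y = 0) \<longrightarrow>
                 closed_nbhd T2 x \<inter> {0,3,4,5} \<noteq> closed_nbhd T2 y \<inter> {0,3,4,5}"
  unfolding T2_verts by (simp add: T2_cn Int_insert_left set_eq_subset insert_subset)


lemma card_parts:
  assumes "finite A" "k \<ge> 3"
  shows "card (Inl ` A \<union> {Inr 0} \<union> Inr ` {3..k} :: ('a + nat) set) = card A + k - 1"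
proof -
  have c1: "card (Inl ` A :: ('a + nat) set) = card A" by (simp add: card_image)
  have c2: "card (Inr ` {3..k} :: ('a + nat) set) = k - 2" by (simp add: card_image)
  have "card (Inl ` A \<union> {Inr 0} :: ('a + nat) set) = card A + 1"
    using assms c1 by (subst card_Un_disjoint) auto
  moreover have "card (Inl ` A \<union> {Inr 0} \<union> Inr ` {3..k} :: ('a + nat) set)
      = card (Inl ` A \<union> {Inr 0} :: ('a + nat) set) + card (Inr ` {3..k} :: ('a + nat) set)"
    using assms by (subst card_Un_disjoint) auto
  ultimately show ?thesis using c2 assms by simp
qed

lemma order_G:
  assumes "k \<ge> 3"
  shows "order (star_attach T2 v k) = k + 7"
proof -
  have "card (Inl ` {0,1,2,3,4,5,6::nat} \<union> {Inr 0} \<union> Inr ` {2..k} :: (nat + nat) set)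
        = card (Inl ` {0,1,2,3,4,5,6::nat} :: (nat + nat) set) + 1 + card (Inr ` {2..k} :: (nat + nat) set)"
    by (subst card_Un_disjoint, auto)+
  also have "\<dots> = 7 + 1 + (k - 1)" by (simp add: card_image)
  finally show ?thesis using assms unfolding order_def vertsG T2_verts by simp
qed

lemma maxdeg_ge:
  assumes v: "v \<in> verts T2" and k: "k \<ge> 3"
  shows "max_degree (star_attach T2 v k) \<ge> k"
proof -
  let ?H = "star_attach T2 v k"
  have "nbhd ?H (Inr 0) = closed_nbhd ?H (Inr 0) - {Inr 0}"
    unfolding closed_nbhd_def nbhd_def by auto
  also have "\<dots> = insert (Inl v) (Inr ` {2..k})" unfolding cn_Inr0[OF v] by auto
  finally have "degree ?H (Inr 0) = card (insert (Inl v) (Inr ` {2..k}) :: (nat + nat) set)"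
    unfolding degree_def by simp
  also have "\<dots> = Suc (card (Inr ` {2..k} :: (nat + nat) set))" by (subst card_insert_disjoint) auto
  also have "\<dots> = k" using k by (simp add: card_image)
  finally have d: "degree ?H (Inr 0) = k" .
  have fin: "finite (verts ?H)" unfolding vertsG T2_verts by simp
  have "Inr 0 \<in> verts ?H" unfolding vertsG by simp
  then have "degree ?H (Inr 0) \<le> max_degree ?H"
    unfolding max_degree_def using fin by (intro Max_ge) auto
  then show ?thesis using d by simp
qed

lemma final:
  assumes v: "v \<in> verts T2" and k: "k \<ge> 3" and A: "A \<subseteq> verts T2" "v \<in> A"
    and dom: "\<forall>x\<in>verts T2. x \<noteq> v \<longrightarrow> closed_nbhd T2 x \<inter> A \<noteq> {}"
    and sep: "\<forall>x\<in>verts T2. \<forall>y\<in>verts T2. x \<noteq> y \<longrightarrow> (x = v) = (y = v) \<longrightarrow>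
                 closed_nbhd T2 x \<inter> A \<noteq> closed_nbhd T2 y \<inter> A"
    and a: "card A = 4 \<or> (card A = 5 \<and> k \<ge> 4)"
  shows "has_id_code (star_attach T2 v k) \<and>
    real (gamma_ID (star_attach T2 v k)) \<le> ((real (max_degree (star_attach T2 v k)) - 1) / real (max_degree (star_attach T2 v k))) * real (order (star_attach T2 v k))"
proof -
  let ?H = "star_attach T2 v k"
  let ?C = "Inl ` A \<union> {Inr 0} \<union> Inr ` {3..k}"
  have code: "is_id_code ?H ?C" by (rule code_lemma[OF v k A dom sep])
  have fA: "finite A" using A(1) finite_subset unfolding T2_verts by auto
  have g: "gamma_ID ?H \<le> card ?C" unfolding gamma_ID_def using code by (intro Least_le) blast
  have cC: "card ?C = card A + k - 1" by (rule card_parts[OF fA k])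
  have "real (card A + k - 1) \<le> (real (max_degree ?H) - 1) / real (max_degree ?H) * real (k + 7)"
    by (rule arithA[OF maxdeg_ge[OF v k] k a])
  then show ?thesis using g cC code order_G[OF k, of v] unfolding has_id_code_def
    by (smt (verit) of_nat_le_iff)
qed


lemma iso33: "graph_iso (star_attach T2 3 3) T3"
proof -
  let ?f = "case_sum (\<lambda>x. x) (\<lambda>i. if i = 0 then 7 else i + 6) :: nat + nat \<Rightarrow> nat"
  have V: "verts (star_attach T2 3 3) = {Inl 0, Inl 1, Inl 2, Inl 3, Inl 4, Inl 5, Inl 6, Inr 0, Inr 2, Inr 3}"
    unfolding vertsG T2_verts by (auto simp: atLeastAtMost_iff)
  have E: "edges (star_attach T2 3 3) = {{Inl 0, Inl 1}, {Inl 1, Inl 2}, {Inl 2, Inl 3}, {Inl 3, Inl 4},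
      {Inl 4, Inl 5}, {Inl 4, Inl 6}, {Inr 0, Inl 3}, {Inr 0, Inr 2}, {Inr 0, Inr 3}}"
    proof -
    have t: "{2..3::nat} = {2,3}" by auto
    show ?thesis unfolding star_attach_def edges_def T2_def t by (simp add: insert_commute)
  qed
  have V3: "verts T3 = {0,1,2,3,4,5,6,7,8,9}" by (auto simp: T3_def verts_def)
  have E3: "edges T3 = {{0,1},{1,2},{2,3},{3,4},{4,5},{4,6},{3,7},{7,8},{7,9}}" by (simp add: T3_def edges_def)
  have "bij_betw ?f (verts (star_attach T2 3 3)) (verts T3)"
    unfolding bij_betw_def V V3 by (auto simp: inj_on_def)
  moreover have "\<forall>u \<in> verts (star_attach T2 3 3). \<forall>w \<in> verts (star_attach T2 3 3).
      {u, w} \<in> edges (star_attach T2 3 3) \<longleftrightarrow> {?f u, ?f w} \<in> edges T3"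
    unfolding V E E3 by (simp add: doubleton_eq_iff)
  ultimately show ?thesis unfolding graph_iso_def by blast
qed


lemma case0:
  assumes "k \<ge> 3" "card ({0,3,4,5}::nat set) = 4 \<or> (card ({0,3,4,5}::nat set) = 5 \<and> k \<ge> 4)"
  shows "has_id_code (star_attach T2 0 k) \<and>
    real (gamma_ID (star_attach T2 0 k)) \<le> ((real (max_degree (star_attach T2 0 k)) - 1) / real (max_degree (star_attach T2 0 k))) * real (order (star_attach T2 0 k))"
  apply (rule final[OF _ assms(1) _ _ _ _ assms(2)])
  apply (simp add: T2_verts)
  apply (simp add: T2_verts)
  apply (simp add: T2_verts)
  apply (simp add: T2_verts T2_cn Int_insert_left)
  apply (simp add: T2_verts T2_cn Int_insert_left set_eq_subset insert_subset)
  done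

lemma case1:
  assumes "k \<ge> 3" "card ({1,2,5,6}::nat set) = 4 \<or> (card ({1,2,5,6}::nat set) = 5 \<and> k \<ge> 4)"
  shows "has_id_code (star_attach T2 1 k) \<and>
    real (gamma_ID (star_attach T2 1 k)) \<le> ((real (max_degree (star_attach T2 1 k)) - 1) / real (max_degree (star_attach T2 1 k))) * real (order (star_attach T2 1 k))"
  apply (rule final[OF _ assms(1) _ _ _ _ assms(2)])
  apply (simp add: T2_verts)
  apply (simp add: T2_verts)
  apply (simp add: T2_verts)
  apply (simp add: T2_verts T2_cn Int_insert_left)
  apply (simp add: T2_verts T2_cn Int_insert_left set_eq_subset insert_subset)
  done

lemma case2:
  assumes "k \<ge> 3" "card ({0,2,5,6}::nat set) = 4 \<or> (card ({0,2,5,6}::nat set) = 5 \<and> k \<ge> 4)"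
  shows "has_id_code (star_attach T2 2 k) \<and>
    real (gamma_ID (star_attach T2 2 k)) \<le> ((real (max_degree (star_attach T2 2 k)) - 1) / real (max_degree (star_attach T2 2 k))) * real (order (star_attach T2 2 k))"
  apply (rule final[OF _ assms(1) _ _ _ _ assms(2)])
  apply (simp add: T2_verts)
  apply (simp add: T2_verts)
  apply (simp add: T2_verts)
  apply (simp add: T2_verts T2_cn Int_insert_left)
  apply (simp add: T2_verts T2_cn Int_insert_left set_eq_subset insert_subset)
  done

lemma case3:
  assumes "k \<ge> 3" "card ({0,2,3,4,5}::nat set) = 4 \<or> (card ({0,2,3,4,5}::nat set) = 5 \<and> k \<ge> 4)"
  shows "has_id_code (star_attach T2 3 k) \<and>
    real (gamma_ID (star_attach T2 3 k)) \<le> ((real (max_degree (star_attach T2 3 k)) - 1) / real (max_degree (star_attach T2 3 k))) * real (order (star_attach T2 3 k))"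
  apply (rule final[OF _ assms(1) _ _ _ _ assms(2)])
  apply (simp add: T2_verts)
  apply (simp add: T2_verts)
  apply (simp add: T2_verts)
  apply (simp add: T2_verts T2_cn Int_insert_left)
  apply (simp add: T2_verts T2_cn Int_insert_left set_eq_subset insert_subset)
  done

lemma case4:
  assumes "k \<ge> 3" "card ({0,2,4,5}::nat set) = 4 \<or> (card ({0,2,4,5}::nat set) = 5 \<and> k \<ge> 4)"
  shows "has_id_code (star_attach T2 4 k) \<and>
    real (gamma_ID (star_attach T2 4 k)) \<le> ((real (max_degree (star_attach T2 4 k)) - 1) / real (max_degree (star_attach T2 4 k))) * real (order (star_attach T2 4 k))"
  apply (rule final[OF _ assms(1) _ _ _ _ assms(2)])
  apply (simp add: T2_verts)
  apply (simp add: T2_verts)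
  apply (simp add: T2_verts)
  apply (simp add: T2_verts T2_cn Int_insert_left)
  apply (simp add: T2_verts T2_cn Int_insert_left set_eq_subset insert_subset)
  done

lemma case5:
  assumes "k \<ge> 3" "card ({0,2,4,5}::nat set) = 4 \<or> (card ({0,2,4,5}::nat set) = 5 \<and> k \<ge> 4)"
  shows "has_id_code (star_attach T2 5 k) \<and>
    real (gamma_ID (star_attach T2 5 k)) \<le> ((real (max_degree (star_attach T2 5 k)) - 1) / real (max_degree (star_attach T2 5 k))) * real (order (star_attach T2 5 k))"
  apply (rule final[OF _ assms(1) _ _ _ _ assms(2)])
  apply (simp add: T2_verts)
  apply (simp add: T2_verts)
  apply (simp add: T2_verts)
  apply (simp add: T2_verts T2_cn Int_insert_left)
  apply (simp add: T2_verts T2_cn Int_insert_left set_eq_subset insert_subset)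
  done

lemma case6:
  assumes "k \<ge> 3" "card ({0,2,4,6}::nat set) = 4 \<or> (card ({0,2,4,6}::nat set) = 5 \<and> k \<ge> 4)"
  shows "has_id_code (star_attach T2 6 k) \<and>
    real (gamma_ID (star_attach T2 6 k)) \<le> ((real (max_degree (star_attach T2 6 k)) - 1) / real (max_degree (star_attach T2 6 k))) * real (order (star_attach T2 6 k))"
  apply (rule final[OF _ assms(1) _ _ _ _ assms(2)])
  apply (simp add: T2_verts)
  apply (simp add: T2_verts)
  apply (simp add: T2_verts)
  apply (simp add: T2_verts T2_cn Int_insert_left)
  apply (simp add: T2_verts T2_cn Int_insert_left set_eq_subset insert_subset)
  done

theorem mainTheorem10:
  fixes v :: nat and k :: nat and G :: "(nat + nat) graph"
  assumes "v \<in> verts T2"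
    and "k \<ge> 3"
    and "G = star_attach T2 v k"
    and "max_degree G \<ge> 3"
    and "\<not> graph_iso G T3"
  shows "has_id_code G \<and>
    real (gamma_ID G) \<le> ((real (max_degree G) - 1) / real (max_degree G)) * real (order G)"
proof -
  have "v = 0 \<or> v = 1 \<or> v = 2 \<or> v = 3 \<or> v = 4 \<or> v = 5 \<or> v = 6" using assms(1) unfolding T2_verts by auto
  then show ?thesis
  proof (elim disjE)
    assume "v = 3"
    have "k \<noteq> 3" using assms(3,5) iso33 \<open>v = 3\<close> by auto
    then have "k \<ge> 4" using assms(2) by simp
    then show ?thesis unfolding assms(3) using \<open>v = 3\<close> case3[of k] by simp
  qed (use case0 case1 case2 case4 case5 case6 assms(2) in \<open>simp_all add: assms(3)\<close>)
qed

end
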